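(* Let $\Sigma$ be a $d\times d_1$ matrix function on $\mathbb{R}^d$ with bounded Borel measurable entries such that $\Sigma(x)\neq\Sigma(y)$ whenever $x\neq y$, let $A=\Sigma\Sigma^t$, and let $b$ be a Borel vector field with $\langle x-y,b(x)-b(y)\rangle\ge0$ for all $x,y$. Then there exists at most one probability solution $\mu$ to $L^*\mu=0$ with $\int|b(x)||x|\,\mu(dx)<\infty$. In particular, if $b=0$ then $L^*\mu=0$ has at most one probability solution, and if moreover $\Sigma(x_0)=0$ for some $x_0$, then $\delta_{x_0}$ is the only probability solution.
   Context: For a symmetric nonnegative definite matrix $A(x)=(a^{ij}(x))$ and a vector field $b(x)=(b^i(x))$ with Borel measurable entries, $Lf(x)=\mathrm{trace}(A(x)D^2f(x))+\langle b(x),\nabla f(x)\rangle$. A probability solution to $L^*\mu=0$ is a Borel probability measure $\mu$ on $\mathbb{R}^d$ such that all $a^{ij}$ and $b^i$ are $\mu$-integrable on every compact set and $\int_{\mathbb{R}^d}Lf\,d\mu=0$ for every $f\in C_0^\infty(\mathbb{R}^d)$. *)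

theory Defs
  imports "HOL-Analysis.Analysis" "HOL-Probability.Probability"
begin

definition partial :: "'n::finite \<Rightarrow> (real^'n \<Rightarrow> real) \<Rightarrow> real^'n \<Rightarrow> real" where
  "partial i f x = frechet_derivative f (at x) (axis i 1)"

fun Ck :: "nat \<Rightarrow> (real^'n::finite \<Rightarrow> real) \<Rightarrow> bool" where
  "Ck 0 f = continuous_on UNIV f"
| "Ck (Suc k) f = ((\<forall>x. f differentiable (at x)) \<and> continuous_on UNIV f \<and>
                   (\<forall>i. Ck k (partial i f)))"

definition smooth :: "(real^'n::finite \<Rightarrow> real) \<Rightarrow> bool" where
  "smooth f = (\<forall>k. Ck k f)"

definition test_fun :: "(real^'n::finite \<Rightarrow> real) \<Rightarrow> bool" where
  "test_fun f = (smooth f \<and> compact (closure {x. f x \<noteq> 0}))"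

definition Lop :: "(real^'n \<Rightarrow> real^'n^'n) \<Rightarrow> (real^'n \<Rightarrow> real^'n) \<Rightarrow>
    (real^'n::finite \<Rightarrow> real) \<Rightarrow> real^'n \<Rightarrow> real" where
  "Lop A b f x = (\<Sum>i\<in>UNIV. \<Sum>j\<in>UNIV. A x $ i $ j * partial j (partial i f) x)
               + (\<Sum>i\<in>UNIV. b x $ i * partial i f x)"

definition prob_solution :: "(real^'n \<Rightarrow> real^'n^'n) \<Rightarrow> (real^'n \<Rightarrow> real^'n) \<Rightarrow>
    (real^'n::finite) measure \<Rightarrow> bool" where
  "prob_solution A b \<mu> =
     (prob_space \<mu> \<and> sets \<mu> = sets borel \<and>
      (\<forall>K. compact K \<longrightarrow>
         (\<forall>i j. set_integrable \<mu> K (\<lambda>x. A x $ i $ j)) \<and>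
         (\<forall>i. set_integrable \<mu> K (\<lambda>x. b x $ i))) \<and>
      (\<forall>f. test_fun f \<longrightarrow> (\<integral>x. Lop A b f x \<partial>\<mu>) = 0))"

end

theory Submission
  imports Defs "HOL-Computational_Algebra.Polynomial"
begin

definition gq :: "real poly \<Rightarrow> real \<Rightarrow> real" where
  "gq p t = (if t > 0 then poly p (1/t) * exp (- (1/t)) else 0)"

definition Tp :: "real poly \<Rightarrow> real poly" where
  "Tp p = [:0,0,1:] * (p - pderiv p)"

lemma poly_exp_lim: "((\<lambda>u. poly (r::real poly) u * exp (- u)) \<longlongrightarrow> 0) at_top"
proof -
  have "((\<lambda>u. \<Sum>i\<le>degree r. coeff r i * (u ^ i / exp u)) \<longlongrightarrow> (\<Sum>i\<le>degree r. coeff r i * 0)) at_top"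
    by (intro tendsto_sum tendsto_mult tendsto_const tendsto_power_div_exp_0)
  moreover have "(\<lambda>u. \<Sum>i\<le>degree r. coeff r i * (u ^ i / exp u)) = (\<lambda>u. poly r u * exp (- u))"
    by (auto simp: poly_altdef sum_distrib_right exp_minus divide_inverse mult.assoc)
  ultimately show ?thesis by simp
qed

lemma gq_deriv: "(gq p has_real_derivative gq (Tp p) t) (at t)"
proof (cases "t > 0")
  case True
  have d: "((\<lambda>s. poly p (1/s) * exp (- (1/s))) has_real_derivative gq (Tp p) t) (at t)"
  proof -
    have "((\<lambda>s. poly p (1/s) * exp (- (1/s))) has_real_derivative
        (poly (pderiv p) (1/t) * (- 1 / t^2)) * exp (- (1/t)) + poly p (1/t) * (exp (- (1/t)) * (1/t^2))) (at t)"
      using True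
      by (auto intro!: derivative_eq_intros DERIV_chain2[OF poly_DERIV] simp: power2_eq_square field_simps)
    moreover have "(poly (pderiv p) (1/t) * (- 1 / t^2)) * exp (- (1/t)) + poly p (1/t) * (exp (- (1/t)) * (1/t^2))
        = gq (Tp p) t"
      using True by (simp add: gq_def Tp_def algebra_simps power2_eq_square)
    ultimately show ?thesis by simp
  qed
  show ?thesis
    by (rule has_field_derivative_transform_within_open[OF d, of "{0<..}"]) (use True in \<open>auto simp: gq_def\<close>)
next
  case False
  show ?thesis
  proof (cases "t < 0")
    case True
    have "((\<lambda>s. 0) has_real_derivative 0) (at t)" by simp
    then have "(gq p has_real_derivative 0) (at t)"
      by (rule has_field_derivative_transform_within_open[of _ _ _ "{..<0}"]) (use True in \<open>auto simp: gq_def\<close>)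
    then show ?thesis using True by (simp add: gq_def)
  next
    case False
    with \<open>\<not> t > 0\<close> have t0: "t = 0" by simp
    have "((\<lambda>h. gq p h / h) \<longlongrightarrow> 0) (at 0)"
    proof (subst filterlim_at_split, rule conjI)
      show "((\<lambda>h. gq p h / h) \<longlongrightarrow> 0) (at_left 0)"
        by (rule tendsto_eventually, rule eventually_mono[OF eventually_at_left_real[of "-1" 0]]) (auto simp: gq_def)
      have "((\<lambda>u. poly (pCons 0 p) u * exp (- u)) \<longlongrightarrow> 0) at_top" by (rule poly_exp_lim)
      then have "((\<lambda>h. gq p (inverse h) / (inverse h)) \<longlongrightarrow> 0) at_top"
        by (rule Lim_transform_eventually)
           (auto simp: eventually_at_top_linorder gq_def field_simps intro!: exI[of _ 1])
      then show "((\<lambda>h. gq p h / h) \<longlongrightarrow> 0) (at_right 0)"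
        by (simp add: filterlim_at_right_to_top)
    qed
    then show ?thesis using t0 by (simp add: DERIV_def gq_def)
  qed
qed

lemma deriv_gq: "deriv (gq p) = gq (Tp p)"
  using gq_deriv DERIV_imp_deriv by blast

lemma funpow_deriv_gq: "(deriv ^^ k) (gq p) = gq ((Tp ^^ k) p)"
  by (induction k arbitrary: p) (simp_all add: deriv_gq funpow_Suc_right del: funpow.simps(2))

definition smooth1 :: "(real \<Rightarrow> real) \<Rightarrow> bool" where
  "smooth1 g = (\<forall>k x. ((deriv ^^ k) g) differentiable (at x))"

lemma smooth1_gq: "smooth1 (gq p)"
  unfolding smooth1_def funpow_deriv_gq
  using gq_deriv real_differentiable_def by blast

lemma smooth1_deriv: "smooth1 g \<Longrightarrow> smooth1 (deriv g)"
  unfolding smooth1_def by (metis funpow_Suc_right o_apply)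

lemma smooth1_DERIV: "smooth1 g \<Longrightarrow> (g has_real_derivative deriv g x) (at x)"
  unfolding smooth1_def using DERIV_deriv_iff_real_differentiable
  by (metis funpow_0)

inductive sm :: "(real^'n::finite \<Rightarrow> real) \<Rightarrow> bool" where
  sm_const: "sm (\<lambda>x. c)"
| sm_coord: "sm (\<lambda>x. x $ i)"
| sm_add: "sm f \<Longrightarrow> sm g \<Longrightarrow> sm (\<lambda>x. f x + g x)"
| sm_mult: "sm f \<Longrightarrow> sm g \<Longrightarrow> sm (\<lambda>x. f x * g x)"
| sm_comp: "smooth1 g \<Longrightarrow> sm f \<Longrightarrow> sm (\<lambda>x. g (f x))"

lemma partial_has: "(f has_derivative f') (at x) \<Longrightarrow> partial i f x = f' (axis i 1)"
  unfolding partial_def using frechet_derivative_at by metis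

lemma partial_const: "partial i (\<lambda>x. c) = (\<lambda>x. 0)"
  by (rule ext, rule partial_has) (rule has_derivative_const)

lemma partial_coord: "partial i (\<lambda>x. x $ j) = (\<lambda>x. if j = i then 1 else 0)"
proof (rule ext)
  fix x :: "real^'a"
  have "((\<lambda>x. x $ j) has_derivative (\<lambda>h. h $ j)) (at x)"
    by (rule bounded_linear_imp_has_derivative) (rule bounded_linear_vec_nth)
  then show "partial i (\<lambda>x. x $ j) x = (if j = i then 1 else 0)"
    by (auto dest!: partial_has[of _ _ _ i] simp: axis_def)
qed

lemma fd_works: "f differentiable (at x) \<Longrightarrow> (f has_derivative frechet_derivative f (at x)) (at x)"
  using frechet_derivative_works by blast

lemma partial_add:
  assumes "\<And>x. f differentiable (at x)" "\<And>x. g differentiable (at x)"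
  shows "partial i (\<lambda>x. f x + g x) = (\<lambda>x. partial i f x + partial i g x)"
proof (rule ext)
  fix x
  show "partial i (\<lambda>x. f x + g x) x = partial i f x + partial i g x"
    using partial_has[OF has_derivative_add[OF fd_works[OF assms(1)] fd_works[OF assms(2)]], of i]
    by (simp add: partial_def)
qed

lemma partial_mult:
  assumes "\<And>x. f differentiable (at x)" "\<And>x. g differentiable (at x)"
  shows "partial i (\<lambda>x. f x * g x) = (\<lambda>x. f x * partial i g x + partial i f x * g x)"
proof (rule ext)
  fix x
  show "partial i (\<lambda>x. f x * g x) x = f x * partial i g x + partial i f x * g x"
    using partial_has[OF has_derivative_mult[OF fd_works[OF assms(1)] fd_works[OF assms(2)]], of i]
    by (simp add: partial_def)
qed

lemma partial_comp:
  assumes "smooth1 g" "\<And>x. f differentiable (at x)"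
  shows "partial i (\<lambda>x. g (f x)) = (\<lambda>x. partial i f x * deriv g (f x))"
proof (rule ext)
  fix x
  show "partial i (\<lambda>x. g (f x)) x = partial i f x * deriv g (f x)"
    using partial_has[OF DERIV_compose_FDERIV[OF smooth1_DERIV[OF assms(1)] fd_works[OF assms(2)]], of i]
    by (simp add: partial_def)
qed

lemma sm_diff: "sm f \<Longrightarrow> (\<forall>x. f differentiable (at x)) \<and> (\<forall>i. sm (partial i f))"
proof (induction rule: sm.induct)
  case (sm_const c)
  then show ?case by (simp add: partial_const sm.sm_const)
next
  case (sm_coord j)
  have "sm (\<lambda>x::real^'a. if j = i then 1 else 0)" for i
    by (rule sm.sm_const)
  then show ?case by (simp add: partial_coord bounded_linear_imp_differentiable[OF bounded_linear_vec_nth])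
next
  case (sm_add f g)
  then have "sm (\<lambda>x. partial i f x + partial i g x)" for i by (intro sm.sm_add) auto
  then show ?case using sm_add by (simp add: partial_add)
next
  case (sm_mult f g)
  then have "sm (\<lambda>x. f x * partial i g x + partial i f x * g x)" for i
    by (intro sm.sm_add sm.sm_mult) auto
  then show ?case using sm_mult by (simp add: partial_mult)
next
  case (sm_comp g f)
  have "g differentiable (at y)" for y
    using smooth1_DERIV[OF sm_comp(1)] real_differentiable_def by blast
  then have d: "(\<lambda>x. g (f x)) differentiable (at x)" for x
    using sm_comp differentiable_chain_at[of f x g] by (simp add: o_def)
  have "sm (\<lambda>x. partial i f x * deriv g (f x))" for i
    using sm_comp by (intro sm.sm_mult sm.sm_comp[of "deriv g" f] smooth1_deriv) auto
  then show ?case using sm_comp d by (simp add: partial_comp)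
qed

lemma sm_cont: "sm f \<Longrightarrow> continuous_on UNIV f"
proof -
  assume "sm f"
  then have "\<forall>x. f differentiable (at x)" using sm_diff by blast
  then have "\<forall>x\<in>UNIV. isCont f x" by (simp add: differentiable_imp_continuous_within)
  then show ?thesis by (rule continuous_at_imp_continuous_on)
qed

lemma sm_Ck: "sm f \<Longrightarrow> Ck k f"
proof (induction k arbitrary: f)
  case 0
  then show ?case using sm_cont by simp
next
  case (Suc k)
  have "\<forall>x. f differentiable (at x)" "\<forall>i. sm (partial i f)" using sm_diff[OF Suc.prems] by auto
  then show ?case using Suc.IH sm_cont[OF Suc.prems] by simp
qed

lemma sm_smooth: "sm f \<Longrightarrow> smooth f"
  unfolding smooth_def using sm_Ck by auto

lemma sm_sum: "finite S \<Longrightarrow> (\<And>i. i \<in> S \<Longrightarrow> sm (f i)) \<Longrightarrow> sm (\<lambda>x. \<Sum>i\<in>S. f i x)"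
  by (induction S rule: finite_induct) (auto intro: sm_const sm_add)

lemma sm_inner: "sm (\<lambda>x. inner x (y::real^'n::finite))"
  unfolding inner_vec_def by (auto intro!: sm_sum sm_mult sm_const sm_coord simp: inner_real_def)

lemma sm_inner2: "sm (\<lambda>x. inner x (x::real^'n::finite))"
  unfolding inner_vec_def by (auto intro!: sm_sum sm_mult sm_const sm_coord simp: inner_real_def)


definition rr :: "real \<Rightarrow> real" where "rr R = 1 / R^2"

definition qf :: "real \<Rightarrow> real^'n::finite \<Rightarrow> real" where
  "qf R x = 1 - rr R * inner x x"
definition Pf :: "real \<Rightarrow> real^'n::finite \<Rightarrow> real^'n \<Rightarrow> real" where
  "Pf c m x = c * inner x x - 2 * inner m x"
definition FF :: "real \<Rightarrow> real \<Rightarrow> real^'n::finite \<Rightarrow> real^'n \<Rightarrow> real" where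
  "FF R c m x = gq 1 (qf R x) * Pf c m x"

abbreviation "p1 \<equiv> Tp 1"
abbreviation "p2 \<equiv> Tp (Tp 1)"

definition F1 :: "real \<Rightarrow> real \<Rightarrow> real^'n::finite \<Rightarrow> 'n \<Rightarrow> real^'n \<Rightarrow> real" where
  "F1 R c m i x = gq p1 (qf R x) * (-2 * x$i * rr R) * Pf c m x + gq 1 (qf R x) * (2*c*x$i - 2*m$i)"

definition F2 :: "real \<Rightarrow> real \<Rightarrow> real^'n::finite \<Rightarrow> 'n \<Rightarrow> 'n \<Rightarrow> real^'n \<Rightarrow> real" where
  "F2 R c m i j x = gq p2 (qf R x) * (-2 * x$j * rr R) * (-2 * x$i * rr R) * Pf c m x
     + gq p1 (qf R x) * (-2 * (if i = j then 1 else 0) * rr R) * Pf c m x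
     + gq p1 (qf R x) * (-2 * x$i * rr R) * (2*c*x$j - 2*m$j)
     + gq p1 (qf R x) * (-2 * x$j * rr R) * (2*c*x$i - 2*m$i)
     + gq 1 (qf R x) * (2*c*(if i = j then 1 else 0))"

lemma gq_chain: "(g has_derivative g') (at x) \<Longrightarrow>
  ((\<lambda>x. gq p (g x)) has_derivative (\<lambda>h. g' h * gq (Tp p) (g x))) (at x)"
  by (rule DERIV_compose_FDERIV[OF gq_deriv])

lemma qf_has: "(qf R has_derivative (\<lambda>h. - 2 * inner x h * rr R)) (at x)"
  unfolding qf_def
  by (rule has_derivative_eq_rhs, (auto intro!: derivative_eq_intros)[1]) (auto simp: inner_commute algebra_simps)

lemma Pf_has: "(Pf c m has_derivative (\<lambda>h. 2 * c * inner x h - 2 * inner m h)) (at x)"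
  unfolding Pf_def
  by (rule has_derivative_eq_rhs, (auto intro!: derivative_eq_intros)[1]) (auto simp: inner_commute algebra_simps)

lemma partial_FF: "partial i (FF R c m) = F1 R c m i"
proof (rule ext)
  fix x
  have "(FF R c m has_derivative (\<lambda>h. (- 2 * inner x h * rr R) * gq p1 (qf R x) * Pf c m x
      + gq 1 (qf R x) * (2 * c * inner x h - 2 * inner m h))) (at x)"
    unfolding FF_def[abs_def]
    by (rule has_derivative_eq_rhs, rule has_derivative_mult[OF gq_chain[OF qf_has] Pf_has])
      (auto simp: field_simps)
  from partial_has[OF this, of i] show "partial i (FF R c m) x = F1 R c m i x"
    by (simp add: F1_def inner_axis)
qed

lemma vec_nth_has: "((\<lambda>x. x $ i) has_derivative (\<lambda>h. h $ i)) (at x)"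
  by (rule bounded_linear_imp_has_derivative) (rule bounded_linear_vec_nth)

lemma zeta_has: "((\<lambda>x. gq p (qf R x)) has_derivative (\<lambda>h. (- 2 * inner x h * rr R) * gq (Tp p) (qf R x))) (at x)"
  by (rule gq_chain[OF qf_has])

lemma lin_has: fixes x :: "real^'n::finite" shows "((\<lambda>x. a * x$i + b) has_derivative (\<lambda>h. a * h$i)) (at x)"
proof -
  have "bounded_linear (\<lambda>x::real^'n. a * x$i)"
    using bounded_linear_compose[OF bounded_linear_mult_right[of a] bounded_linear_vec_nth[of i]] by simp
  then show ?thesis by (intro has_derivative_add_const bounded_linear_imp_has_derivative)
qed

lemma axnth: "axis j (1::real) $ i = (if i = j then 1 else 0)"
  by (simp add: axis_def)

lemma F1_alt: "F1 R c m i x = gq p1 (qf R x) * ((-2 * rr R) * x$i + 0) * Pf c m x + gq 1 (qf R x) * ((2*c) * x$i + (- 2*m$i))"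
  by (simp add: F1_def)

lemma partial_F1: "partial j (F1 R c m i) = F2 R c m i j"
proof (rule ext)
  fix x
  have "(F1 R c m i has_derivative (\<lambda>h.
      gq p1 (qf R x) * ((-2 * rr R) * x$i + 0) * (2 * c * inner x h - 2 * inner m h) +
      (gq p1 (qf R x) * ((-2 * rr R) * h$i) + (- 2 * inner x h * rr R) * gq p2 (qf R x) * ((-2 * rr R) * x$i + 0)) * Pf c m x
      + (gq 1 (qf R x) * ((2*c) * h$i) + (- 2 * inner x h * rr R) * gq p1 (qf R x) * ((2*c) * x$i + (- 2*m$i))))) (at x)"
    unfolding F1_alt[abs_def]
    by (intro has_derivative_add has_derivative_mult zeta_has lin_has Pf_has)
  from partial_has[OF this, of j] show "partial j (F1 R c m i) x = F2 R c m i j x"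
    by (cases "i = j") (simp_all add: F2_def inner_axis axnth algebra_simps)
qed


lemma gq_nonpos: "t \<le> 0 \<Longrightarrow> gq p t = 0"
  by (simp add: gq_def)

lemma gq_cont: "continuous_on UNIV (gq p)"
  using gq_deriv by (meson DERIV_isCont continuous_at_imp_continuous_on)

lemma gq_meas[measurable]: "gq p \<in> borel_measurable borel"
  by (rule borel_measurable_continuous_onI[OF gq_cont])

lemma gq_bound: "\<exists>K. \<forall>t\<le>1. \<bar>gq p t\<bar> \<le> K"
proof -
  have "compact (gq p ` {0..1})"
    by (intro compact_continuous_image compact_Icc continuous_on_subset[OF gq_cont]) auto
  then obtain K where K: "\<forall>y\<in>gq p ` {0..1}. norm y \<le> K"
    using compact_imp_bounded bounded_iff by metis
  have "\<bar>gq p t\<bar> \<le> K" if "t \<le> 1" for t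
  proof (cases "t \<le> 0")
    case True
    then show ?thesis using K[rule_format, of "gq p 1"] by (simp add: gq_nonpos)
  next
    case False
    then show ?thesis using K that by auto
  qed
  then show ?thesis by blast
qed

lemma gq_bound3: "\<exists>K\<ge>1. \<forall>t\<le>1. \<bar>gq 1 t\<bar> \<le> K \<and> \<bar>gq p1 t\<bar> \<le> K \<and> \<bar>gq p2 t\<bar> \<le> K"
proof -
  obtain K0 K1 K2 where "\<forall>t\<le>1. \<bar>gq 1 t\<bar> \<le> K0" "\<forall>t\<le>1. \<bar>gq p1 t\<bar> \<le> K1" "\<forall>t\<le>1. \<bar>gq p2 t\<bar> \<le> K2"
    using gq_bound by metis
  then show ?thesis
    by (intro exI[of _ "max 1 (max K0 (max K1 K2))"]) (auto simp: le_max_iff_disj)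
qed

lemma gq1_nonneg: "gq 1 t \<ge> 0"
  by (simp add: gq_def)

lemma qf_le1: "qf R x \<le> 1"
  by (simp add: qf_def rr_def)

lemma qf_pos_norm: "R > 0 \<Longrightarrow> qf R x > 0 \<Longrightarrow> norm x < R"
proof -
  assume R: "R > 0" and q: "qf R x > 0"
  then have "inner x x < R^2" by (simp add: qf_def rr_def field_simps)
  then have "norm x ^ 2 < R ^ 2" by (simp add: power2_norm_eq_inner)
  then show "norm x < R" using R power_less_imp_less_base[of "norm x" 2 R] by simp
qed

lemma gq_qf_supp: "R > 0 \<Longrightarrow> gq p (qf R x) \<noteq> 0 \<Longrightarrow> norm x < R"
  using qf_pos_norm gq_nonpos by (metis not_less)

lemma sm_qf: "sm (qf R)"
proof -
  have eq: "qf R = (\<lambda>x. 1 + (- rr R) * inner x x)" by (auto simp: qf_def)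
  show ?thesis unfolding eq
    by (intro sm_add sm_const sm_mult sm_inner2)
qed

lemma sm_Pf: "sm (Pf c m)"
proof -
  have eq: "Pf c m = (\<lambda>x. c * inner x x + (-2) * inner x m)" by (auto simp: Pf_def inner_commute)
  show ?thesis unfolding eq
    by (intro sm_add sm_const sm_mult sm_inner2 sm_inner)
qed

lemma sm_FF: "sm (FF R c m)"
proof -
  have eq: "FF R c m = (\<lambda>x. gq 1 (qf R x) * Pf c m x)" by (auto simp: FF_def)
  show ?thesis unfolding eq
    by (intro sm_mult sm_comp[of "gq 1" "qf R"] smooth1_gq sm_qf sm_Pf)
qed

lemma test_FF: "R > 0 \<Longrightarrow> test_fun (FF R c m)"
proof -
  assume R: "R > 0"
  have "{x. FF R c m x \<noteq> 0} \<subseteq> ball 0 R"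
    using gq_qf_supp[OF R] by (auto simp: FF_def)
  then have "bounded {x. FF R c m x \<noteq> 0}" using bounded_subset bounded_ball by blast
  then show ?thesis unfolding test_fun_def using sm_smooth[OF sm_FF] by simp
qed

lemma Lop_FF: "Lop A b (FF R c m) x =
  (\<Sum>i\<in>UNIV. \<Sum>j\<in>UNIV. A x $ i $ j * F2 R c m i j x) + (\<Sum>i\<in>UNIV. b x $ i * F1 R c m i x)"
  unfolding Lop_def partial_FF partial_F1 ..


lemma abs_mult_le: "\<bar>a\<bar> \<le> A \<Longrightarrow> \<bar>b\<bar> \<le> B \<Longrightarrow> \<bar>a * b\<bar> \<le> A * (B::real)"
  by (simp add: abs_mult mult_mono')

lemma Eb:
  fixes g1 g2 xi xj p ei ej u d K K' :: real
  assumes "\<bar>g1\<bar> \<le> K" "\<bar>g2\<bar> \<le> K" "\<bar>xi\<bar> \<le> u" "\<bar>xj\<bar> \<le> u" "\<bar>p\<bar> \<le> K' * u"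
    "\<bar>ei\<bar> \<le> 4 * K" "\<bar>ej\<bar> \<le> 4 * K" "0 \<le> u" "u \<le> 1" "\<bar>d\<bar> \<le> 1" "0 \<le> K" "0 \<le> K'"
  shows "\<bar>g2 * 4 * xj * xi * p - 2 * d * g1 * p - 2 * g1 * xi * ej - 2 * g1 * xj * ei\<bar>
    \<le> (6 * K * K' + 16 * K * K) * u"
proof -
  have uu: "u * u \<le> 1" using assms by (simp add: mult_le_one)
  have "\<bar>g2 * 4 * xj * xi * p\<bar> \<le> K * 4 * u * u * (K' * u)"
    by (intro abs_mult_le) (simp_all add: assms)
  also have "\<dots> = (u * u) * (4 * K * K' * u)" by (simp add: algebra_simps)
  also have "\<dots> \<le> 4 * K * K' * u" using assms uu by (intro mult_left_le_one_le) simp_all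
  finally have t1: "\<bar>g2 * 4 * xj * xi * p\<bar> \<le> 4 * K * K' * u" .
  have "\<bar>2 * d * g1 * p\<bar> \<le> 2 * 1 * K * (K' * u)"
    by (intro abs_mult_le) (simp_all add: assms)
  then have t2: "\<bar>2 * d * g1 * p\<bar> \<le> 2 * K * K' * u" by (simp add: algebra_simps)
  have "\<bar>2 * g1 * xi * ej\<bar> \<le> 2 * K * u * (4 * K)"
    by (intro abs_mult_le) (simp_all add: assms)
  then have t3: "\<bar>2 * g1 * xi * ej\<bar> \<le> 8 * K * K * u" by (simp add: algebra_simps)
  have "\<bar>2 * g1 * xj * ei\<bar> \<le> 2 * K * u * (4 * K)"
    by (intro abs_mult_le) (simp_all add: assms)
  then have t4: "\<bar>2 * g1 * xj * ei\<bar> \<le> 8 * K * K * u" by (simp add: algebra_simps)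
  have "\<bar>g2 * 4 * xj * xi * p - 2 * d * g1 * p - 2 * g1 * xi * ej - 2 * g1 * xj * ei\<bar>
     \<le> \<bar>g2 * 4 * xj * xi * p\<bar> + \<bar>2 * d * g1 * p\<bar> + \<bar>2 * g1 * xi * ej\<bar> + \<bar>2 * g1 * xj * ei\<bar>"
    by linarith
  also have "\<dots> \<le> (6 * K * K' + 16 * K * K) * u" using t1 t2 t3 t4 by (simp add: algebra_simps)
  finally show ?thesis .
qed


definition EE :: "real \<Rightarrow> real \<Rightarrow> real^'n::finite \<Rightarrow> 'n \<Rightarrow> 'n \<Rightarrow> real^'n \<Rightarrow> real" where
  "EE R c m i j x = F2 R c m i j x - gq 1 (qf R x) * (2*c*(if i = j then 1 else 0))"

definition ff :: "real \<Rightarrow> real \<Rightarrow> real^'n::finite \<Rightarrow> 'n \<Rightarrow> real^'n \<Rightarrow> real" where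
  "ff R c m i x = gq p1 (qf R x) * (-2 * x$i * rr R) * Pf c m x"

lemma F1_split: "F1 R c m i x = ff R c m i x + gq 1 (qf R x) * (2*c*x$i - 2*m$i)"
  by (simp add: F1_def ff_def)

lemma F2_split: "F2 R c m i j x = EE R c m i j x + gq 1 (qf R x) * (2*c*(if i = j then 1 else 0))"
  by (simp add: EE_def)

definition BB :: "real \<Rightarrow> real" where
  "BB K = 6 * K * (K + 2 * real CARD('n::finite) * K) + 16 * K * K"

lemma EE_zero: "R > 0 \<Longrightarrow> norm x \<ge> R \<Longrightarrow> EE R c m i j x = 0"
  using gq_qf_supp[of R _ x] by (force simp: EE_def F2_def)

lemma ff_zero: "R > 0 \<Longrightarrow> norm x \<ge> R \<Longrightarrow> ff R c m i x = 0"
  using gq_qf_supp[of R _ x] by (force simp: ff_def)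

lemma inner_m_bound:
  fixes m x :: "real^'n::finite"
  assumes "\<forall>i. \<bar>m$i\<bar> \<le> M"
  shows "\<bar>inner m x\<bar> \<le> real CARD('n) * M * norm x"
proof -
  have "\<bar>inner m x\<bar> = \<bar>\<Sum>i\<in>UNIV. m$i * x$i\<bar>" by (simp add: inner_vec_def)
  also have "\<dots> \<le> (\<Sum>i\<in>UNIV. \<bar>m$i * x$i\<bar>)" by (rule sum_abs)
  also have "\<dots> \<le> (\<Sum>i\<in>(UNIV::'n set). M * norm x)"
    by (intro sum_mono abs_mult_le) (simp_all add: assms component_le_norm_cart)
  finally show ?thesis by simp
qed

lemma EE_ff_bound:
  fixes x m :: "real^'n::finite"
  assumes R: "R \<ge> 1" and K: "K \<ge> 1" "\<forall>t\<le>1. \<bar>gq 1 t\<bar> \<le> K \<and> \<bar>gq p1 t\<bar> \<le> K \<and> \<bar>gq p2 t\<bar> \<le> K"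
    and c: "\<bar>c\<bar> \<le> K" and m: "\<forall>i. \<bar>m$i\<bar> \<le> K * R"
  shows "\<bar>EE R c m i j x\<bar> \<le> BB TYPE('n) K * (norm x / R)"
    and "\<bar>ff R c m i x\<bar> \<le> BB TYPE('n) K * norm x * (norm x / R)"
proof -
  define N where "N = real CARD('n)"
  define K' where "K' = K + 2 * N * K"
  have N: "N \<ge> 0" by (simp add: N_def)
  have K'0: "K' \<ge> 0" using K N by (simp add: K'_def)
  have BB: "BB TYPE('n) K = 6 * K * K' + 16 * K * K" by (simp add: BB_def K'_def N_def)
  have R0: "R > 0" using R by simp
  have "\<bar>EE R c m i j x\<bar> \<le> BB TYPE('n) K * (norm x / R) \<and>
        \<bar>ff R c m i x\<bar> \<le> BB TYPE('n) K * norm x * (norm x / R)"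
  proof (cases "norm x \<ge> R")
    case True
    have B0: "BB TYPE('n) K \<ge> 0" using K N by (simp add: BB_def N_def)
    then show ?thesis using EE_zero[OF R0 True] ff_zero[OF R0 True] R0 by simp
  next
    case False
    define r where "r = norm x"
    define u where "u = r / R"
    have u0: "0 \<le> u" and u1: "u \<le> 1" using False R by (simp_all add: u_def r_def)
    have ru: "r = u * R" using R by (simp add: u_def)
    have xi: "\<bar>x$k / R\<bar> \<le> u" for k
      using component_le_norm_cart[of x k] R by (simp add: u_def r_def divide_right_mono)
    have q1: "qf R x \<le> 1" by (rule qf_le1)
    have g0: "\<bar>gq 1 (qf R x)\<bar> \<le> K" and g1: "\<bar>gq p1 (qf R x)\<bar> \<le> K" and g2: "\<bar>gq p2 (qf R x)\<bar> \<le> K"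
      using K(2) q1 by auto
    have Pb: "\<bar>Pf c m x\<bar> \<le> K' * u * R^2"
    proof -
      have "\<bar>Pf c m x\<bar> \<le> \<bar>c * inner x x\<bar> + 2 * \<bar>inner m x\<bar>" by (simp add: Pf_def)
      also have "\<bar>c * inner x x\<bar> \<le> K * (r * r)"
        by (intro abs_mult_le) (simp_all add: c r_def power2_norm_eq_inner[symmetric] power2_eq_square)
      also have "\<bar>inner m x\<bar> \<le> N * (K * R) * r" using inner_m_bound[OF m] by (simp add: N_def r_def)
      finally have "\<bar>Pf c m x\<bar> \<le> K * (r * r) + 2 * (N * (K * R) * r)" by simp
      also have "\<dots> = (K * u + 2 * N * K) * u * R^2" by (simp add: ru power2_eq_square algebra_simps)
      also have "\<dots> \<le> K' * u * R^2"
        using u0 u1 K N by (intro mult_right_mono) (simp_all add: K'_def)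
      finally show ?thesis .
    qed
    have pb: "\<bar>Pf c m x * rr R\<bar> \<le> K' * u"
      using Pb R by (simp add: rr_def abs_mult pos_divide_le_eq)
    have eb: "\<bar>(2*c*x$k - 2*m$k) / R\<bar> \<le> 4 * K" for k
    proof -
      have t: "\<bar>2*c*x$k - 2*m$k\<bar> \<le> 2 * \<bar>c * x$k\<bar> + 2 * \<bar>m$k\<bar>" by simp
      have a: "\<bar>c * x$k\<bar> \<le> K * R"
        using component_le_norm_cart[of x k] False by (intro abs_mult_le) (simp_all add: c)
      have b: "\<bar>m$k\<bar> \<le> K * R" using m by simp
      have "\<bar>2*c*x$k - 2*m$k\<bar> \<le> 4 * K * R" using t a b by linarith
      then show ?thesis using R by (simp add: pos_divide_le_eq)
    qed
    have EEeq: "EE R c m i j x = gq p2 (qf R x) * 4 * (x$j / R) * (x$i / R) * (Pf c m x * rr R)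
       - 2 * (if i = j then 1 else 0) * gq p1 (qf R x) * (Pf c m x * rr R)
       - 2 * gq p1 (qf R x) * (x$i / R) * ((2*c*x$j - 2*m$j) / R)
       - 2 * gq p1 (qf R x) * (x$j / R) * ((2*c*x$i - 2*m$i) / R)"
      using R by (simp add: EE_def F2_def rr_def power2_eq_square field_simps)
    have "\<bar>EE R c m i j x\<bar> \<le> (6 * K * K' + 16 * K * K) * u"
      unfolding EEeq by (rule Eb[OF g1 g2 xi xi pb eb eb u0 u1]) (use K K'0 in auto)
    then have A: "\<bar>EE R c m i j x\<bar> \<le> BB TYPE('n) K * (norm x / R)"
      by (simp add: BB u_def r_def)
    have ffeq: "ff R c m i x = (-2 * gq p1 (qf R x) * x$i) * (Pf c m x * rr R)"
      by (simp add: ff_def algebra_simps)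
    have "\<bar>ff R c m i x\<bar> \<le> (2 * K * r) * (K' * u)"
    proof -
      have f1: "\<bar>-2 * gq p1 (qf R x) * x$i\<bar> \<le> 2 * K * r"
        by (intro abs_mult_le) (simp_all add: g1 r_def component_le_norm_cart)
      show ?thesis unfolding ffeq by (rule abs_mult_le[OF f1 pb])
    qed
    also have "\<dots> = (2 * K * K') * r * u" by simp
    also have "\<dots> \<le> BB TYPE('n) K * r * u"
      using K K'0 u0 by (intro mult_right_mono) (simp_all add: BB r_def)
    finally show ?thesis using A by (simp add: u_def r_def)
  qed
  then show "\<bar>EE R c m i j x\<bar> \<le> BB TYPE('n) K * (norm x / R)"
    and "\<bar>ff R c m i x\<bar> \<le> BB TYPE('n) K * norm x * (norm x / R)" by auto
qed


lemma meas_borel: "sets M = sets borel \<Longrightarrow> f \<in> borel_measurable borel \<Longrightarrow> f \<in> borel_measurable M"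
  using measurable_cong_sets[of M borel borel borel] by simp

lemma vec_nth_meas[measurable]: "(\<lambda>v::real^'n::finite. v $ i) \<in> borel_measurable borel"
  by (rule borel_measurable_continuous_onI[OF linear_continuous_on[OF bounded_linear_vec_nth]])

lemma int_loc:
  fixes \<mu> :: "(real^'n::finite) measure" and g h :: "real^'n \<Rightarrow> real"
  assumes S: "sets \<mu> = sets borel" and gm: "g \<in> borel_measurable borel"
    and gi: "set_integrable \<mu> (cball 0 R) g" and hm: "h \<in> borel_measurable borel"
    and hb: "\<And>x. \<bar>h x\<bar> \<le> H" and hs: "\<And>x. h x \<noteq> 0 \<Longrightarrow> norm x \<le> R"
  shows "integrable \<mu> (\<lambda>x. h x * g x)"
proof -
  have I: "integrable \<mu> (\<lambda>x. H * (indicator (cball 0 R) x *\<^sub>R g x))"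
    using gi unfolding set_integrable_def by (rule integrable_mult_right)
  have Mm: "(\<lambda>x. h x * g x) \<in> borel_measurable \<mu>"
    using meas_borel[OF S gm] meas_borel[OF S hm] by measurable
  have AE: "AE x in \<mu>. norm (h x * g x) \<le> norm (H * (indicator (cball 0 R) x *\<^sub>R g x))"
  proof (rule AE_I2)
    fix x
    show "norm (h x * g x) \<le> norm (H * (indicator (cball 0 R) x *\<^sub>R g x))"
    proof (cases "h x = 0")
      case True then show ?thesis by simp
    next
      case False
      then have "x \<in> cball 0 R" using hs by auto
      moreover have "\<bar>h x\<bar> * \<bar>g x\<bar> \<le> \<bar>H\<bar> * \<bar>g x\<bar>" using hb[of x]
        by (intro mult_right_mono) auto
      ultimately show ?thesis by (simp add: abs_mult)
    qed
  qed
  show ?thesis by (rule Bochner_Integration.integrable_bound[OF I Mm AE])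
qed

lemma int_bdd:
  fixes \<mu> :: "(real^'n::finite) measure" and h :: "real^'n \<Rightarrow> real"
  assumes "prob_space \<mu>" "sets \<mu> = sets borel" "h \<in> borel_measurable borel" "\<And>x. \<bar>h x\<bar> \<le> H"
  shows "integrable \<mu> h"
proof -
  interpret prob_space \<mu> by fact
  show ?thesis
    by (rule integrable_const_bound[where B=H]) (use assms meas_borel in auto)
qed

lemma cov:
  fixes \<mu> :: "(real^'n::finite) measure" and b :: "real^'n \<Rightarrow> real^'n" and w :: "real^'n \<Rightarrow> real"
  assumes P: "prob_space \<mu>" and S: "sets \<mu> = sets borel" and bm: "b \<in> borel_measurable borel"
    and mono: "\<And>x y. inner (x - y) (b x - b y) \<ge> 0"
    and loc: "\<And>i. set_integrable \<mu> (cball 0 R) (\<lambda>x. b x $ i)"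
    and wm: "w \<in> borel_measurable borel" and w0: "\<And>x. 0 \<le> w x" and wW: "\<And>x. w x \<le> W"
    and ws: "\<And>x. w x \<noteq> 0 \<Longrightarrow> norm x \<le> R" and R0: "R \<ge> 0"
  shows "0 \<le> (\<integral>x. w x * (\<Sum>i\<in>UNIV. b x $ i * ((\<integral>z. w z \<partial>\<mu>) * x$i - (\<integral>z. w z * z$i \<partial>\<mu>))) \<partial>\<mu>)"
proof -
  interpret prob_space \<mu> by fact
  have bm'[measurable]: "b \<in> borel_measurable borel" by (rule bm)
  have bim[measurable]: "(\<lambda>x. b x $ i) \<in> borel_measurable borel" for i by measurable
  have wm'[measurable]: "w \<in> borel_measurable borel" by (rule wm)
  have wabs: "\<bar>w x\<bar> \<le> W" for x using w0 wW by (simp add: abs_of_nonneg)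
  have wz: "\<bar>w z * z$i\<bar> \<le> W * R" for z i
  proof (cases "w z = 0")
    case False
    then have "\<bar>z$i\<bar> \<le> R" using ws component_le_norm_cart order_trans by blast
    then show ?thesis using wabs[of z] by (intro abs_mult_le) auto
  next
    case True
    have "0 \<le> W" using w0 wW order_trans by blast
    then show ?thesis using True R0 by simp
  qed
  have wzs: "w z * z$i \<noteq> 0 \<Longrightarrow> norm z \<le> R" for z i using ws by auto
  have iw: "integrable \<mu> w" by (rule int_bdd[OF P S wm wabs])
  have iwz: "integrable \<mu> (\<lambda>z. w z * z$i)" for i by (rule int_bdd[OF P S _ wz]) measurable
  have iwb: "integrable \<mu> (\<lambda>z. w z * b z $ i)" for i by (rule int_loc[OF S bim loc wm wabs ws])
  have iwzb: "integrable \<mu> (\<lambda>z. (w z * z$i) * b z $ i)" for i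
    by (rule int_loc[OF S bim loc _ wz wzs]) measurable
  define cw where "cw = (\<integral>z. w z \<partial>\<mu>)"
  define M where "M i = (\<integral>z. w z * z$i \<partial>\<mu>)" for i
  define V where "V i = (\<integral>z. w z * b z $ i \<partial>\<mu>)" for i
  define Bs where "Bs = (\<integral>z. (\<Sum>i\<in>UNIV. (w z * z$i) * b z $ i) \<partial>\<mu>)"
  define G where "G x z = w x * w z * inner (b x - b z) (x - z)" for x z
  have Geq: "G x z = (w x * (\<Sum>i\<in>UNIV. b x $ i * x$i)) * w z
      - (\<Sum>i\<in>UNIV. (w x * b x $ i) * (w z * z$i))
      - (\<Sum>i\<in>UNIV. (w x * x$i) * (w z * b z $ i))
      + w x * (\<Sum>i\<in>UNIV. (w z * z$i) * b z $ i)" for x z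
  proof -
    have e1: "inner (b x - b z) (x - z) = (\<Sum>i\<in>UNIV. b x $ i * x$i - b x $ i * z$i - x$i * b z $ i + z$i * b z $ i)"
      unfolding inner_vec_def by (rule sum.cong) (simp_all add: algebra_simps)
    have e2: "inner (b x - b z) (x - z) = (\<Sum>i\<in>UNIV. b x $ i * x$i) - (\<Sum>i\<in>UNIV. b x $ i * z$i)
        - (\<Sum>i\<in>UNIV. x$i * b z $ i) + (\<Sum>i\<in>UNIV. z$i * b z $ i)"
      unfolding e1 by (simp only: sum.distrib sum_subtractf)
    have s2: "(\<Sum>i\<in>UNIV. (w x * b x $ i) * (w z * z$i)) = w x * w z * (\<Sum>i\<in>UNIV. b x $ i * z$i)"
      by (simp add: sum_distrib_left mult_ac)
    have s3: "(\<Sum>i\<in>UNIV. (w x * x$i) * (w z * b z $ i)) = w x * w z * (\<Sum>i\<in>UNIV. x$i * b z $ i)"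
      by (simp add: sum_distrib_left mult_ac)
    have s4: "w x * (\<Sum>i\<in>UNIV. (w z * z$i) * b z $ i) = w x * w z * (\<Sum>i\<in>UNIV. z$i * b z $ i)"
      by (simp add: sum_distrib_left mult_ac)
    show ?thesis unfolding G_def e2 s2 s3 s4 by (simp add: algebra_simps)
  qed
  have inner1: "(\<integral>z. G x z \<partial>\<mu>) = (w x * (\<Sum>i\<in>UNIV. b x $ i * x$i)) * cw
      - (\<Sum>i\<in>UNIV. (w x * b x $ i) * M i) - (\<Sum>i\<in>UNIV. (w x * x$i) * V i) + w x * Bs" for x
  proof -
    have I1: "integrable \<mu> (\<lambda>z. (w x * (\<Sum>i\<in>UNIV. b x $ i * x$i)) * w z)" using iw by simp
    have I2: "integrable \<mu> (\<lambda>z. \<Sum>i\<in>UNIV. (w x * b x $ i) * (w z * z$i))"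
      by (auto intro!: integrable_sum integrable_mult_right iwz)
    have I3: "integrable \<mu> (\<lambda>z. \<Sum>i\<in>UNIV. (w x * x$i) * (w z * b z $ i))"
      by (auto intro!: integrable_sum integrable_mult_right iwb)
    have I4: "integrable \<mu> (\<lambda>z. w x * (\<Sum>i\<in>UNIV. (w z * z$i) * b z $ i))"
      by (auto intro!: integrable_sum integrable_mult_right iwzb)
    have "(\<integral>z. G x z \<partial>\<mu>) = (\<integral>z. (w x * (\<Sum>i\<in>UNIV. b x $ i * x$i)) * w z \<partial>\<mu>)
      - (\<integral>z. (\<Sum>i\<in>UNIV. (w x * b x $ i) * (w z * z$i)) \<partial>\<mu>)
      - (\<integral>z. (\<Sum>i\<in>UNIV. (w x * x$i) * (w z * b z $ i)) \<partial>\<mu>)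
      + (\<integral>z. w x * (\<Sum>i\<in>UNIV. (w z * z$i) * b z $ i) \<partial>\<mu>)"
      unfolding Geq
      using I1 I2 I3 I4 by (simp only: Bochner_Integration.integral_add Bochner_Integration.integral_diff
          Bochner_Integration.integrable_diff)
    also have "\<dots> = (w x * (\<Sum>i\<in>UNIV. b x $ i * x$i)) * cw
      - (\<Sum>i\<in>UNIV. (w x * b x $ i) * M i) - (\<Sum>i\<in>UNIV. (w x * x$i) * V i) + w x * Bs"
      unfolding cw_def M_def V_def Bs_def
      using iwz iwb by (simp add: Bochner_Integration.integral_sum)
    finally show ?thesis .
  qed
  have G0: "0 \<le> (\<integral>x. (\<integral>z. G x z \<partial>\<mu>) \<partial>\<mu>)"
  proof -
    have "0 \<le> inner (b x - b z) (x - z)" for x z using mono[of x z] by (simp add: inner_commute)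
    then have "0 \<le> G x z" for x z unfolding G_def using w0 by (simp add: mult_nonneg_nonneg)
    then show ?thesis by (intro integral_nonneg_AE AE_I2 integral_nonneg_AE) simp
  qed
  have "(\<integral>x. (\<integral>z. G x z \<partial>\<mu>) \<partial>\<mu>) = Bs * cw - (\<Sum>i\<in>UNIV. V i * M i) - (\<Sum>i\<in>UNIV. M i * V i) + cw * Bs"
  proof -
    have eqx: "(\<lambda>x. (\<integral>z. G x z \<partial>\<mu>)) = (\<lambda>x. (\<Sum>i\<in>UNIV. (w x * x$i) * b x $ i) * cw
      - (\<Sum>i\<in>UNIV. (w x * b x $ i) * M i) - (\<Sum>i\<in>UNIV. (w x * x$i) * V i) + w x * Bs)"
      by (rule ext, unfold inner1) (simp add: sum_distrib_left algebra_simps)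
    show ?thesis unfolding eqx
      by (simp add: iw iwz iwb iwzb integrable_sum integral_sum integral_diff integral_add
          cw_def[symmetric] M_def[symmetric] V_def[symmetric] Bs_def[symmetric])
  qed
  then have "0 \<le> 2 * (cw * Bs - (\<Sum>i\<in>UNIV. M i * V i))" using G0 by (simp add: algebra_simps)
  moreover have "(\<integral>x. w x * (\<Sum>i\<in>UNIV. b x $ i * (cw * x$i - M i)) \<partial>\<mu>) = cw * Bs - (\<Sum>i\<in>UNIV. M i * V i)"
  proof -
    have eqx: "(\<lambda>x. w x * (\<Sum>i\<in>UNIV. b x $ i * (cw * x$i - M i))) =
       (\<lambda>x. cw * (\<Sum>i\<in>UNIV. (w x * x$i) * b x $ i) - (\<Sum>i\<in>UNIV. M i * (w x * b x $ i)))"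
      by (rule ext) (simp add: sum_distrib_left sum_subtractf[symmetric] algebra_simps)
    show ?thesis unfolding eqx
      by (simp add: iw iwz iwb iwzb integrable_sum integral_sum integral_diff
          cw_def[symmetric] M_def[symmetric] V_def[symmetric] Bs_def[symmetric])
  qed
  ultimately show ?thesis by (simp add: cw_def M_def)
qed


lemma qf_meas[measurable]: "qf R \<in> borel_measurable borel"
  by (rule borel_measurable_continuous_onI[OF sm_cont[OF sm_qf]])

lemma Pf_meas[measurable]: "Pf c m \<in> borel_measurable borel"
  by (rule borel_measurable_continuous_onI[OF sm_cont[OF sm_Pf]])

lemma EE_meas[measurable]: "EE R c m i j \<in> borel_measurable borel"
  unfolding EE_def[abs_def] F2_def by measurable

lemma ff_meas[measurable]: "ff R c m i \<in> borel_measurable borel"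
  unfolding ff_def[abs_def] by measurable

lemma rr_lim: "(rr \<longlongrightarrow> 0) at_top"
proof -
  have "LIM R at_top. (R::real)^2 :> at_top"
    using filterlim_pow_at_top[of 2 "\<lambda>R::real. R" at_top, OF _ filterlim_ident] by simp
  then have "((\<lambda>R::real. 1 / R^2) \<longlongrightarrow> 0) at_top"
    by (intro tendsto_divide_0[OF tendsto_const] filterlim_at_top_imp_at_infinity)
  then show ?thesis by (simp add: rr_def[abs_def])
qed

lemma zeta_lim: "((\<lambda>R. gq 1 (qf R x)) \<longlongrightarrow> exp (-1)) at_top"
proof -
  have "((\<lambda>R. qf R x) \<longlongrightarrow> 1 - 0 * inner x x) at_top"
    unfolding qf_def by (intro tendsto_intros rr_lim)
  then have q: "((\<lambda>R. qf R x) \<longlongrightarrow> 1) at_top" by simp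
  have "isCont (gq 1) 1" using gq_deriv DERIV_isCont by blast
  from isCont_tendsto_compose[OF this q]
  have "((\<lambda>R. gq 1 (qf R x)) \<longlongrightarrow> gq 1 1) at_top" .
  then show ?thesis by (simp add: gq_def)
qed


lemma sum_delta_split:
  fixes a e :: "'n::finite \<Rightarrow> 'n \<Rightarrow> real"
  shows "(\<Sum>i\<in>UNIV. \<Sum>j\<in>UNIV. a i j * (e i j + k * (if i = j then 1 else 0)))
     = (\<Sum>i\<in>UNIV. \<Sum>j\<in>UNIV. a i j * e i j) + k * (\<Sum>i\<in>UNIV. a i i)"
proof -
  have "(\<Sum>i\<in>UNIV. \<Sum>j\<in>UNIV. a i j * (e i j + k * (if i = j then 1 else 0)))
     = (\<Sum>i\<in>UNIV. (\<Sum>j\<in>UNIV. a i j * e i j) + k * a i i)"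
  proof (rule sum.cong[OF refl])
    fix i
    have "(\<Sum>j\<in>UNIV. a i j * (e i j + k * (if i = j then 1 else 0)))
        = (\<Sum>j\<in>UNIV. a i j * e i j) + (\<Sum>j\<in>UNIV. (if i = j then k * a i j else 0))"
    proof -
      have "(\<Sum>j\<in>UNIV. a i j * (e i j + k * (if i = j then 1 else 0)))
          = (\<Sum>j\<in>UNIV. a i j * e i j + (if i = j then k * a i j else 0))"
        by (rule sum.cong) (auto simp: algebra_simps)
      then show ?thesis by (simp only: sum.distrib)
    qed
    also have "(\<Sum>j\<in>UNIV. (if i = j then k * a i j else 0)) = k * a i i"
      by (simp add: sum.delta)
    finally show "(\<Sum>j\<in>UNIV. a i j * (e i j + k * (if i = j then 1 else 0))) = (\<Sum>j\<in>UNIV. a i j * e i j) + k * a i i" .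
  qed
  also have "\<dots> = (\<Sum>i\<in>UNIV. \<Sum>j\<in>UNIV. a i j * e i j) + k * (\<Sum>i\<in>UNIV. a i i)"
    by (simp add: sum.distrib sum_distrib_left)
  finally show ?thesis .
qed

lemma sum_b_split:
  fixes bb f x mm :: "'n::finite \<Rightarrow> real"
  shows "(\<Sum>i\<in>UNIV. bb i * (f i + z * (2*c*x i - 2*mm i)))
    = (\<Sum>i\<in>UNIV. bb i * f i) + 2 * (z * (\<Sum>i\<in>UNIV. bb i * (c * x i - mm i)))"
proof -
  have "(\<Sum>i\<in>UNIV. bb i * (f i + z * (2*c*x i - 2*mm i)))
     = (\<Sum>i\<in>UNIV. bb i * f i + 2 * z * (bb i * (c * x i - mm i)))"
    by (rule sum.cong) (simp_all add: algebra_simps)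
  also have "\<dots> = (\<Sum>i\<in>UNIV. bb i * f i) + 2 * z * (\<Sum>i\<in>UNIV. bb i * (c * x i - mm i))"
    by (simp only: sum.distrib sum_distrib_left)
  finally show ?thesis by simp
qed

lemma Lop_decomp:
  "Lop A b (FF R c m) x =
     ((\<Sum>i\<in>UNIV. \<Sum>j\<in>UNIV. A x $ i $ j * EE R c m i j x) + (\<Sum>i\<in>UNIV. b x $ i * ff R c m i x))
     + (2 * c * gq 1 (qf R x)) * (\<Sum>i\<in>UNIV. A x $ i $ i)
     + 2 * (gq 1 (qf R x) * (\<Sum>i\<in>UNIV. b x $ i * (c * x$i - m$i)))"
proof -
  have "Lop A b (FF R c m) x =
     (\<Sum>i\<in>UNIV. \<Sum>j\<in>UNIV. A x $ i $ j * (EE R c m i j x + (2 * c * gq 1 (qf R x)) * (if i = j then 1 else 0)))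
     + (\<Sum>i\<in>UNIV. b x $ i * (ff R c m i x + gq 1 (qf R x) * (2*c*x$i - 2*m$i)))"
    unfolding Lop_FF F1_split F2_split by (simp add: mult_ac)
  also have "\<dots> = ((\<Sum>i\<in>UNIV. \<Sum>j\<in>UNIV. A x $ i $ j * EE R c m i j x) + (2 * c * gq 1 (qf R x)) * (\<Sum>i\<in>UNIV. A x $ i $ i))
     + ((\<Sum>i\<in>UNIV. b x $ i * ff R c m i x) + 2 * (gq 1 (qf R x) * (\<Sum>i\<in>UNIV. b x $ i * (c * x$i - m$i))))"
    using sum_delta_split[of "\<lambda>i j. A x $ i $ j" "\<lambda>i j. EE R c m i j x" "2 * c * gq 1 (qf R x)"]
      sum_b_split[of "\<lambda>i. b x $ i" "\<lambda>i. ff R c m i x" "gq 1 (qf R x)" c "\<lambda>i. x$i" "\<lambda>i. m$i"]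
    by simp
  finally show ?thesis by simp
qed


lemma key:
  fixes S :: "real^'n::finite \<Rightarrow> real^'m::finite^'n" and b :: "real^'n \<Rightarrow> real^'n"
    and \<mu> :: "(real^'n) measure"
  assumes Sm: "\<And>i k. (\<lambda>x. S x $ i $ k) \<in> borel_measurable borel"
    and Sb: "\<And>x i k. \<bar>S x $ i $ k\<bar> \<le> C"
    and bm: "b \<in> borel_measurable borel"
    and mono: "\<And>x y. inner (x - y) (b x - b y) \<ge> 0"
    and sol: "prob_solution (\<lambda>x. S x ** transpose (S x)) b \<mu>"
    and ib: "integrable \<mu> (\<lambda>x. norm (b x) * norm x)"
  shows "AE x in \<mu>. S x = 0"
proof -
  define A where "A = (\<lambda>x. S x ** transpose (S x))"
  have P: "prob_space \<mu>" and SS: "sets \<mu> = sets borel"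
    and loc: "\<And>K i. compact K \<Longrightarrow> set_integrable \<mu> K (\<lambda>x. b x $ i)"
    and L0: "\<And>f. test_fun f \<Longrightarrow> (\<integral>x. Lop A b f x \<partial>\<mu>) = 0"
    using sol unfolding prob_solution_def A_def by auto
  interpret prob_space \<mu> by (rule P)
  have Sm'[measurable]: "(\<lambda>x. S x $ i $ k) \<in> borel_measurable borel" for i k by (rule Sm)
  have bm'[measurable]: "b \<in> borel_measurable borel" by (rule bm)
  have C0: "0 \<le> C" using Sb[of undefined undefined undefined] by linarith
  have Aij: "A x $ i $ j = (\<Sum>k\<in>UNIV. S x $ i $ k * S x $ j $ k)" for x i j
    by (simp add: A_def matrix_matrix_mult_def transpose_def)
  have Am[measurable]: "(\<lambda>x. A x $ i $ j) \<in> borel_measurable borel" for i j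
    unfolding Aij by measurable
  define N where "N = real CARD('n)"
  define \<alpha> where "\<alpha> = real CARD('m) * (C * C)"
  have Ab: "\<bar>A x $ i $ j\<bar> \<le> \<alpha>" for x i j
  proof -
    have "\<bar>A x $ i $ j\<bar> \<le> (\<Sum>k\<in>UNIV. \<bar>S x $ i $ k * S x $ j $ k\<bar>)" unfolding Aij by (rule sum_abs)
    also have "\<dots> \<le> (\<Sum>k\<in>(UNIV::'m set). C * C)" by (intro sum_mono abs_mult_le Sb)
    finally show ?thesis by (simp add: \<alpha>_def)
  qed
  define tr where "tr x = (\<Sum>i\<in>UNIV. \<Sum>k\<in>UNIV. (S x $ i $ k)^2)" for x
  have trA: "(\<Sum>i\<in>UNIV. A x $ i $ i) = tr x" for x by (simp add: Aij tr_def power2_eq_square)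
  have trm[measurable]: "tr \<in> borel_measurable borel" unfolding tr_def by measurable
  have tr0: "0 \<le> tr x" for x unfolding tr_def by (intro sum_nonneg) auto
  have trb: "tr x \<le> N * \<alpha>" for x
  proof -
    have "tr x = \<bar>\<Sum>i\<in>UNIV. A x $ i $ i\<bar>" using trA tr0 by simp
    also have "\<dots> \<le> (\<Sum>i\<in>UNIV. \<bar>A x $ i $ i\<bar>)" by (rule sum_abs)
    also have "\<dots> \<le> (\<Sum>i\<in>(UNIV::'n set). \<alpha>)" by (intro sum_mono Ab)
    finally show ?thesis by (simp add: N_def)
  qed
  obtain K where K1: "K \<ge> 1" and Kb: "\<forall>t\<le>1. \<bar>gq 1 t\<bar> \<le> K \<and> \<bar>gq p1 t\<bar> \<le> K \<and> \<bar>gq p2 t\<bar> \<le> K"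
    using gq_bound3 by blast
  define z where "z R (x::real^'n) = gq 1 (qf R x)" for R x
  have zm[measurable]: "z R \<in> borel_measurable borel" for R unfolding z_def[abs_def] by measurable
  have z0: "0 \<le> z R x" for R x by (simp add: z_def gq1_nonneg)
  have zK: "z R x \<le> K" for R x using Kb qf_le1[of R x] by (auto simp: z_def)
  have zabs: "\<bar>z R x\<bar> \<le> K" for R x using z0 zK by simp
  have zs: "R > 0 \<Longrightarrow> z R x \<noteq> 0 \<Longrightarrow> norm x < R" for R x using gq_qf_supp by (simp add: z_def)
  define c where "c R = (\<integral>x. z R x \<partial>\<mu>)" for R
  define m where "m R = (\<chi> i. \<integral>x. z R x * x$i \<partial>\<mu>)" for R
  have iz: "integrable \<mu> (z R)" for R by (rule int_bdd[OF P SS zm zabs])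
  have cK: "\<bar>c R\<bar> \<le> K" for R
  proof -
    have "c R \<le> (\<integral>x. K \<partial>\<mu>)" unfolding c_def by (rule integral_mono[OF iz]) (simp_all add: zK)
    moreover have "0 \<le> c R" unfolding c_def by (rule integral_nonneg_AE) (simp add: z0)
    ultimately show ?thesis by (simp add: prob_space.prob_space[OF P])
  qed
  have zx: "R \<ge> 1 \<Longrightarrow> \<bar>z R x * x$i\<bar> \<le> K * R" for R x i
  proof (cases "z R x = 0")
    case True
    assume "R \<ge> 1" then show ?thesis using True K1 by simp
  next
    case False
    assume R: "R \<ge> 1"
    then have "norm x < R" using zs False by simp
    then have "\<bar>x$i\<bar> \<le> R" using component_le_norm_cart[of x i] by simp
    then show ?thesis using zabs by (intro abs_mult_le) auto
  qed
  have izx: "R \<ge> 1 \<Longrightarrow> integrable \<mu> (\<lambda>x. z R x * x$i)" for R i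
  proof -
    assume R: "R \<ge> 1"
    have "(\<lambda>x. z R x * x$i) \<in> borel_measurable borel" by measurable
    then show ?thesis by (rule int_bdd[OF P SS _ zx[OF R]])
  qed
  have mK: "R \<ge> 1 \<Longrightarrow> \<bar>m R $ i\<bar> \<le> K * R" for R i
  proof -
    assume R: "R \<ge> 1"
    have "\<bar>m R $ i\<bar> \<le> (\<integral>x. K * R \<partial>\<mu>)" unfolding m_def vec_lambda_beta
      by (rule integral_abs_bound_integral[OF izx[OF R]]) (simp_all add: zx[OF R])
    then show ?thesis by (simp add: prob_space.prob_space[OF P])
  qed
  define Err where "Err R x = (\<Sum>i\<in>UNIV. \<Sum>j\<in>UNIV. A x $ i $ j * EE R (c R) (m R) i j x)
      + (\<Sum>i\<in>UNIV. b x $ i * ff R (c R) (m R) i x)" for R x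
  have Errm[measurable]: "Err R \<in> borel_measurable borel" for R unfolding Err_def[abs_def] by measurable
  define D1 where "D1 = N * N * \<alpha> * BB TYPE('n) K"
  define D2 where "D2 = N * BB TYPE('n) K"
  have ErrB: "R \<ge> 1 \<Longrightarrow> \<bar>Err R x\<bar> \<le> (D1 + D2 * (norm (b x) * norm x)) * (norm x / R)" for R x
  proof -
    assume R: "R \<ge> 1"
    have mK': "\<forall>i. \<bar>m R $ i\<bar> \<le> K * R" using mK[OF R] by blast
    note EB = EE_ff_bound[OF R K1 Kb cK[of R] mK']
    have "\<bar>\<Sum>i\<in>UNIV. \<Sum>j\<in>UNIV. A x $ i $ j * EE R (c R) (m R) i j x\<bar>
        \<le> (\<Sum>i\<in>UNIV. \<Sum>j\<in>UNIV. \<bar>A x $ i $ j * EE R (c R) (m R) i j x\<bar>)"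
      by (rule order_trans[OF sum_abs sum_mono[OF sum_abs]])
    also have "\<dots> \<le> (\<Sum>i\<in>(UNIV::'n set). \<Sum>j\<in>(UNIV::'n set). \<alpha> * (BB TYPE('n) K * (norm x / R)))"
      by (intro sum_mono abs_mult_le Ab EB(1))
    finally have t1: "\<bar>\<Sum>i\<in>UNIV. \<Sum>j\<in>UNIV. A x $ i $ j * EE R (c R) (m R) i j x\<bar>
        \<le> D1 * (norm x / R)" by (simp add: D1_def N_def)
    have "\<bar>\<Sum>i\<in>UNIV. b x $ i * ff R (c R) (m R) i x\<bar> \<le> (\<Sum>i\<in>UNIV. \<bar>b x $ i * ff R (c R) (m R) i x\<bar>)"
      by (rule sum_abs)
    also have "\<dots> \<le> (\<Sum>i\<in>(UNIV::'n set). norm (b x) * (BB TYPE('n) K * norm x * (norm x / R)))"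
      by (intro sum_mono abs_mult_le component_le_norm_cart EB(2))
    finally have t2: "\<bar>\<Sum>i\<in>UNIV. b x $ i * ff R (c R) (m R) i x\<bar> \<le> D2 * (norm (b x) * norm x) * (norm x / R)"
      by (simp add: D2_def N_def mult_ac)
    have "\<bar>Err R x\<bar> \<le> D1 * (norm x / R) + D2 * (norm (b x) * norm x) * (norm x / R)"
      unfolding Err_def using t1 t2 by linarith
    then show ?thesis by (simp add: algebra_simps)
  qed
  have ErrZ: "R \<ge> 1 \<Longrightarrow> norm x \<ge> R \<Longrightarrow> Err R x = 0" for R x
    using EE_zero[of R x] ff_zero[of R x] by (simp add: Err_def)
  have BB0: "0 \<le> BB TYPE('n) K" using K1 by (simp add: BB_def)
  have al0: "0 \<le> \<alpha>" using C0 by (simp add: \<alpha>_def)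
  have D0: "0 \<le> D1" "0 \<le> D2" using BB0 al0 by (simp_all add: D1_def D2_def N_def)
  have ErrW: "R \<ge> 1 \<Longrightarrow> \<bar>Err R x\<bar> \<le> D1 + D2 * (norm (b x) * norm x)" for R x
  proof (cases "norm x \<ge> R")
    case True
    assume "R \<ge> 1"
    then show ?thesis using ErrZ[of R x] True D0 by simp
  next
    case False
    assume R: "R \<ge> 1"
    have "0 \<le> D1 + D2 * (norm (b x) * norm x)" using D0 by simp
    moreover have "norm x / R \<le> 1" using False R by simp
    ultimately have "(D1 + D2 * (norm (b x) * norm x)) * (norm x / R) \<le> D1 + D2 * (norm (b x) * norm x)"
      by (intro mult_left_le) auto
    then show ?thesis using ErrB[OF R, of x] by linarith
  qed
  have iw: "integrable \<mu> (\<lambda>x. D1 + D2 * (norm (b x) * norm x))"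
    using ib by (intro Bochner_Integration.integrable_add integrable_mult_right) simp_all
  have iErr: "R \<ge> 1 \<Longrightarrow> integrable \<mu> (Err R)" for R
  proof -
    assume R: "R \<ge> 1"
    show ?thesis
    proof (rule Bochner_Integration.integrable_bound[OF iw])
      show "Err R \<in> borel_measurable \<mu>" using meas_borel[OF SS Errm] .
      show "AE x in \<mu>. norm (Err R x) \<le> norm (D1 + D2 * (norm (b x) * norm x))"
        using ErrW[OF R] by (intro AE_I2) (smt (verit) real_norm_def)
    qed
  qed
  have trabs: "\<bar>tr x\<bar> \<le> N * \<alpha>" for x using tr0 trb by simp
  have iM1: "integrable \<mu> (\<lambda>x. (2 * c R * z R x) * tr x)" for R
  proof (rule int_bdd[OF P SS])
    show "(\<lambda>x. 2 * c R * z R x * tr x) \<in> borel_measurable borel" by measurable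
    show "\<bar>2 * c R * z R x * tr x\<bar> \<le> 2 * K * K * (N * \<alpha>)" for x
      by (intro abs_mult_le trabs cK zabs) simp
  qed
  have iM2: "R \<ge> 1 \<Longrightarrow> integrable \<mu> (\<lambda>x. 2 * (z R x * (\<Sum>i\<in>UNIV. b x $ i * (c R * x$i - m R $ i))))" for R
  proof -
    assume R: "R \<ge> 1"
    have eq: "(\<lambda>x. 2 * (z R x * (\<Sum>i\<in>UNIV. b x $ i * (c R * x$i - m R $ i))))
       = (\<lambda>x. \<Sum>i\<in>UNIV. (2 * z R x * (c R * x$i - m R $ i)) * b x $ i)"
      by (simp add: sum_distrib_left mult_ac)
    have hb: "\<bar>2 * z R x * (c R * x$i - m R $ i)\<bar> \<le> 2 * K * (K * R + K * R)" for x i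
    proof (cases "z R x = 0")
      case True then show ?thesis using K1 R by simp
    next
      case False
      then have "norm x < R" using zs R by simp
      then have xi: "\<bar>x$i\<bar> \<le> R" using component_le_norm_cart[of x i] by simp
      have "\<bar>c R * x$i\<bar> \<le> K * R" by (rule abs_mult_le[OF cK xi])
      then have "\<bar>c R * x$i - m R $ i\<bar> \<le> K * R + K * R" using mK[OF R, of i] by linarith
      then show ?thesis by (intro abs_mult_le zabs) simp
    qed
    have hs: "2 * z R x * (c R * x$i - m R $ i) \<noteq> 0 \<Longrightarrow> norm x \<le> R" for x i
    proof -
      assume "2 * z R x * (c R * x$i - m R $ i) \<noteq> 0"
      then have "z R x \<noteq> 0" by auto
      then show ?thesis using zs[of R x] R by simp
    qed
    show ?thesis unfolding eq
    proof (rule Bochner_Integration.integrable_sum)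
      fix i
      show "integrable \<mu> (\<lambda>x. 2 * z R x * (c R * x $ i - m R $ i) * b x $ i)"
        by (rule int_loc[OF SS _ loc[OF compact_cball] _ hb hs]) measurable
    qed
  qed
  have M2pos: "R \<ge> 1 \<Longrightarrow> 0 \<le> (\<integral>x. 2 * (z R x * (\<Sum>i\<in>UNIV. b x $ i * (c R * x$i - m R $ i))) \<partial>\<mu>)" for R
  proof -
    assume R: "R \<ge> 1"
    have "0 \<le> (\<integral>x. z R x * (\<Sum>i\<in>UNIV. b x $ i * ((\<integral>z'. z R z' \<partial>\<mu>) * x$i - (\<integral>z'. z R z' * z'$i \<partial>\<mu>))) \<partial>\<mu>)"
    proof (rule cov[OF P SS bm mono loc[OF compact_cball] zm z0 zK])
      show "z R x \<noteq> 0 \<Longrightarrow> norm x \<le> R" for x using zs[of R x] R by simp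
      show "0 \<le> R" using R by simp
    qed
    then show ?thesis by (simp add: c_def m_def)
  qed
  have ineq: "R \<ge> 1 \<Longrightarrow> (\<integral>x. Err R x \<partial>\<mu>) + 2 * c R * (\<integral>x. z R x * tr x \<partial>\<mu>) \<le> 0" for R
  proof -
    assume R: "R \<ge> 1"
    have "test_fun (FF R (c R) (m R))" using R by (intro test_FF) simp
    then have "0 = (\<integral>x. Lop A b (FF R (c R) (m R)) x \<partial>\<mu>)" using L0 by simp
    also have "\<dots> = (\<integral>x. Err R x + (2 * c R * z R x) * tr x
        + 2 * (z R x * (\<Sum>i\<in>UNIV. b x $ i * (c R * x$i - m R $ i))) \<partial>\<mu>)"
      unfolding Lop_decomp Err_def z_def trA ..
    also have "\<dots> = (\<integral>x. Err R x \<partial>\<mu>) + 2 * c R * (\<integral>x. z R x * tr x \<partial>\<mu>)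
        + (\<integral>x. 2 * (z R x * (\<Sum>i\<in>UNIV. b x $ i * (c R * x$i - m R $ i))) \<partial>\<mu>)"
      using iErr[OF R] iM1[of R] iM2[OF R]
      by (simp add: Bochner_Integration.integral_add mult.assoc)
    finally show ?thesis using M2pos[OF R] by linarith
  qed
  have Lc: "(c \<longlongrightarrow> exp (-1)) at_top"
  proof -
    have "((\<lambda>R. \<integral>x. z R x \<partial>\<mu>) \<longlongrightarrow> (\<integral>x. exp (-1) \<partial>\<mu>)) at_top"
    proof (rule integral_dominated_convergence_at_top[where w="\<lambda>x. K"])
      show "AE x in \<mu>. ((\<lambda>R. z R x) \<longlongrightarrow> exp (- 1)) at_top"
        by (intro AE_I2) (simp add: z_def zeta_lim)
      show "\<forall>\<^sub>F R in at_top. AE x in \<mu>. norm (z R x) \<le> K"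
        by (intro always_eventually allI AE_I2) (simp add: zabs)
    qed (use meas_borel[OF SS zm] in auto)
    then show ?thesis by (simp add: c_def[abs_def] prob_space.prob_space[OF P])
  qed
  have Lz: "((\<lambda>R. \<integral>x. z R x * tr x \<partial>\<mu>) \<longlongrightarrow> exp (-1) * (\<integral>x. tr x \<partial>\<mu>)) at_top"
  proof -
    have "((\<lambda>R. \<integral>x. z R x * tr x \<partial>\<mu>) \<longlongrightarrow> (\<integral>x. exp (-1) * tr x \<partial>\<mu>)) at_top"
    proof (rule integral_dominated_convergence_at_top[where w="\<lambda>x. K * (N * \<alpha>)"])
      show "AE x in \<mu>. ((\<lambda>R. z R x * tr x) \<longlongrightarrow> exp (- 1) * tr x) at_top"
        by (intro AE_I2 tendsto_mult tendsto_const) (simp add: z_def zeta_lim)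
      show "\<forall>\<^sub>F R in at_top. AE x in \<mu>. norm (z R x * tr x) \<le> K * (N * \<alpha>)"
        by (intro always_eventually allI AE_I2) (simp only: real_norm_def, intro abs_mult_le zabs trabs)
    qed (use meas_borel[OF SS zm] meas_borel[OF SS trm] in auto)
    then show ?thesis by simp
  qed
  have LE: "((\<lambda>R. \<integral>x. Err R x \<partial>\<mu>) \<longlongrightarrow> 0) at_top"
  proof -
    have "((\<lambda>R. \<integral>x. Err R x \<partial>\<mu>) \<longlongrightarrow> (\<integral>x. 0 \<partial>\<mu>)) at_top"
    proof (rule integral_dominated_convergence_at_top[where w="\<lambda>x. D1 + D2 * (norm (b x) * norm x)"])
      show "AE x in \<mu>. ((\<lambda>R. Err R x) \<longlongrightarrow> 0) at_top"
      proof (intro AE_I2)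
        fix x :: "real^'n"
        have "((\<lambda>R. norm x / R) \<longlongrightarrow> 0) at_top"
          by (intro tendsto_divide_0[OF tendsto_const] filterlim_at_top_imp_at_infinity filterlim_ident)
        then have "((\<lambda>R. (D1 + D2 * (norm (b x) * norm x)) * (norm x / R)) \<longlongrightarrow> 0) at_top"
          by (rule tendsto_mult_right_zero)
        then show "((\<lambda>R. Err R x) \<longlongrightarrow> 0) at_top"
        proof (rule Lim_null_comparison[rotated])
          show "\<forall>\<^sub>F R in at_top. norm (Err R x) \<le> (D1 + D2 * (norm (b x) * norm x)) * (norm x / R)"
            by (rule eventually_at_top_linorderI[of 1]) (simp only: real_norm_def, rule ErrB)
        qed
      qed
      show "\<forall>\<^sub>F R in at_top. AE x in \<mu>. norm (Err R x) \<le> D1 + D2 * (norm (b x) * norm x)"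
        by (rule eventually_at_top_linorderI[of 1], rule AE_I2) (simp only: real_norm_def, rule ErrW)
    qed (use meas_borel[OF SS Errm] iw in auto)
    then show ?thesis by simp
  qed
  have "((\<lambda>R. (\<integral>x. Err R x \<partial>\<mu>) + 2 * c R * (\<integral>x. z R x * tr x \<partial>\<mu>)) \<longlongrightarrow>
      0 + 2 * exp (-1) * (exp (-1) * (\<integral>x. tr x \<partial>\<mu>))) at_top"
    by (intro tendsto_intros LE Lc Lz)
  then have "0 + 2 * exp (-1) * (exp (-1) * (\<integral>x. tr x \<partial>\<mu>)) \<le> 0"
    by (rule tendsto_upperbound) (auto simp: eventually_at_top_linorder intro!: exI[of _ 1] ineq)
  then have "(\<integral>x. tr x \<partial>\<mu>) \<le> 0" by (simp add: mult_le_0_iff)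
  moreover have itr: "integrable \<mu> tr" by (rule int_bdd[OF P SS trm trabs])
  moreover have "0 \<le> (\<integral>x. tr x \<partial>\<mu>)" by (rule integral_nonneg_AE) (simp add: tr0)
  ultimately have "(\<integral>x. tr x \<partial>\<mu>) = 0" by simp
  then have "AE x in \<mu>. tr x = 0" using integral_nonneg_eq_0_iff_AE[OF itr] tr0 by simp
  then show ?thesis
  proof (rule AE_mp, intro AE_I2 impI)
    fix x assume "tr x = 0"
    then have "\<forall>i\<in>UNIV. \<forall>k\<in>UNIV. (S x $ i $ k)^2 = 0" unfolding tr_def
      by (subst (asm) sum_nonneg_eq_0_iff) (auto simp: sum_nonneg_eq_0_iff intro: sum_nonneg)
    then show "S x = 0" by (simp add: vec_eq_iff)
  qed
qed


lemma ae_return: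
  fixes \<mu> :: "(real^'n::finite) measure"
  assumes P: "prob_space \<mu>" and S: "sets \<mu> = sets borel" and ae: "AE x in \<mu>. x = x0"
  shows "\<mu> = return borel x0"
proof (rule measure_eqI)
  show "sets \<mu> = sets (return borel x0)" using S by simp
  fix A assume A: "A \<in> sets \<mu>"
  interpret prob_space \<mu> by (rule P)
  have "emeasure \<mu> A = (\<integral>\<^sup>+x. indicator A x \<partial>\<mu>)" using A by simp
  also have "\<dots> = (\<integral>\<^sup>+x. indicator A x0 \<partial>\<mu>)"
    by (rule nn_integral_cong_AE) (use ae in \<open>auto elim!: eventually_mono\<close>)
  also have "\<dots> = indicator A x0" by (simp add: emeasure_space_1)
  also have "\<dots> = emeasure (return borel x0) A" using A S by simp
  finally show "emeasure \<mu> A = emeasure (return borel x0) A" .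
qed

lemma sol_is_return:
  fixes S :: "real^'n::finite \<Rightarrow> real^'m::finite^'n" and b :: "real^'n \<Rightarrow> real^'n"
    and \<mu> :: "(real^'n) measure"
  assumes Sm: "\<And>i k. (\<lambda>x. S x $ i $ k) \<in> borel_measurable borel"
    and Sb: "\<And>x i k. \<bar>S x $ i $ k\<bar> \<le> C"
    and Sinj: "\<And>x y. x \<noteq> y \<Longrightarrow> S x \<noteq> S y"
    and bm: "b \<in> borel_measurable borel"
    and mono: "\<And>x y. inner (x - y) (b x - b y) \<ge> 0"
    and sol: "prob_solution (\<lambda>x. S x ** transpose (S x)) b \<mu>"
    and ib: "integrable \<mu> (\<lambda>x. norm (b x) * norm x)"
  shows "\<exists>x0. S x0 = 0 \<and> \<mu> = return borel x0"
proof -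
  have P: "prob_space \<mu>" and SS: "sets \<mu> = sets borel" using sol by (auto simp: prob_solution_def)
  interpret prob_space \<mu> by (rule P)
  have ae: "AE x in \<mu>. S x = 0" by (rule key[OF Sm Sb bm mono sol ib])
  obtain x0 where x0: "S x0 = 0"
  proof (rule ccontr)
    assume "\<not> thesis"
    with that have "\<forall>x. S x \<noteq> 0" by blast
    with ae have "AE x in \<mu>. False" by simp
    then show False by simp
  qed
  have "AE x in \<mu>. x = x0" using ae
    by (rule eventually_mono) (use x0 Sinj in metis)
  then have "\<mu> = return borel x0" by (rule ae_return[OF P SS])
  with x0 show ?thesis by blast
qed

lemma integrable_return_borel:
  fixes f :: "real^'n::finite \<Rightarrow> real"
  assumes "f \<in> borel_measurable borel"
  shows "integrable (return borel x0) f"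
proof -
  have m: "f \<in> borel_measurable (return borel x0)" using assms by simp
  have "(\<integral>\<^sup>+x. ennreal (norm (f x)) \<partial>return borel x0) = ennreal (norm (f x0))"
    by (rule nn_integral_return) (use assms in auto)
  then show ?thesis using m by (simp add: integrable_iff_bounded)
qed

lemma return_sol:
  fixes S :: "real^'n::finite \<Rightarrow> real^'m::finite^'n"
  assumes Sm: "\<And>i k. (\<lambda>x. S x $ i $ k) \<in> borel_measurable borel"
    and x0: "S x0 = 0"
  shows "prob_solution (\<lambda>x. S x ** transpose (S x)) (\<lambda>x. 0) (return borel x0)"
  unfolding prob_solution_def
proof (intro conjI allI impI)
  show "prob_space (return borel x0)" by (rule prob_space_return) simp
  show "sets (return borel x0) = sets borel" by simp
  have Sm'[measurable]: "(\<lambda>x. S x $ i $ k) \<in> borel_measurable borel" for i k by (rule Sm)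
  fix K :: "(real^'n) set" assume K: "compact K"
  then have [measurable]: "K \<in> sets borel" by (simp add: compact_imp_closed)
  show "set_integrable (return borel x0) K (\<lambda>x. (S x ** transpose (S x)) $ i $ j)" for i j
    unfolding set_integrable_def
    by (rule integrable_return_borel) (simp add: matrix_matrix_mult_def transpose_def)
  show "set_integrable (return borel x0) K (\<lambda>x. (0::real^'n) $ i)" for i
    by (simp add: set_integrable_def)
next
  fix f :: "real^'n \<Rightarrow> real"
  let ?g = "Lop (\<lambda>x. S x ** transpose (S x)) (\<lambda>x. 0) f"
  show "(\<integral>x. ?g x \<partial>return borel x0) = 0"
  proof (cases "integrable (return borel x0) ?g")
    case True
    then have "?g \<in> borel_measurable (return borel x0)" by blast
    then have "?g \<in> borel_measurable borel" by simp
    then have "(\<integral>x. ?g x \<partial>return borel x0) = ?g x0" by (intro integral_return) simp_all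
    also have "\<dots> = 0" using x0 by (simp add: Lop_def)
    finally show ?thesis .
  next
    case False
    then show ?thesis by (rule not_integrable_integral_eq)
  qed
qed

theorem mainTheorem7:
  fixes \<Sigma> :: "real^'n::finite \<Rightarrow> real^'m::finite^'n"
    and b :: "real^'n \<Rightarrow> real^'n"
  assumes Sigma_meas: "\<And>i k. (\<lambda>x. \<Sigma> x $ i $ k) \<in> borel_measurable borel"
    and Sigma_bdd: "\<exists>C. \<forall>x i k. \<bar>\<Sigma> x $ i $ k\<bar> \<le> C"
    and Sigma_inj: "\<And>x y. x \<noteq> y \<Longrightarrow> \<Sigma> x \<noteq> \<Sigma> y"
    and b_meas: "b \<in> borel_measurable borel"
    and b_mono: "\<And>x y. inner (x - y) (b x - b y) \<ge> 0"
  shows "(\<forall>\<mu> \<nu>. prob_solution (\<lambda>x. \<Sigma> x ** transpose (\<Sigma> x)) b \<mu>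
              \<and> integrable \<mu> (\<lambda>x. norm (b x) * norm x)
              \<and> prob_solution (\<lambda>x. \<Sigma> x ** transpose (\<Sigma> x)) b \<nu>
              \<and> integrable \<nu> (\<lambda>x. norm (b x) * norm x) \<longrightarrow> \<mu> = \<nu>)
      \<and> (b = (\<lambda>x. 0) \<longrightarrow>
           (\<forall>\<mu> \<nu>. prob_solution (\<lambda>x. \<Sigma> x ** transpose (\<Sigma> x)) b \<mu>
              \<and> prob_solution (\<lambda>x. \<Sigma> x ** transpose (\<Sigma> x)) b \<nu> \<longrightarrow> \<mu> = \<nu>))
      \<and> (\<forall>x0. b = (\<lambda>x. 0) \<and> \<Sigma> x0 = 0 \<longrightarrow>
           prob_solution (\<lambda>x. \<Sigma> x ** transpose (\<Sigma> x)) b (return borel x0)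
           \<and> (\<forall>\<mu>. prob_solution (\<lambda>x. \<Sigma> x ** transpose (\<Sigma> x)) b \<mu> \<longrightarrow>
                  \<mu> = return borel x0))"
proof -
  obtain C where Cb: "\<And>x i k. \<bar>\<Sigma> x $ i $ k\<bar> \<le> C" using Sigma_bdd by blast
  have gen: "\<mu> = \<nu>" if bm: "b' \<in> borel_measurable borel"
      and mono: "\<And>x y. inner (x - y) (b' x - b' y) \<ge> 0"
      and s1: "prob_solution (\<lambda>x. \<Sigma> x ** transpose (\<Sigma> x)) b' \<mu>"
      and i1: "integrable \<mu> (\<lambda>x. norm (b' x) * norm x)"
      and s2: "prob_solution (\<lambda>x. \<Sigma> x ** transpose (\<Sigma> x)) b' \<nu>"
      and i2: "integrable \<nu> (\<lambda>x. norm (b' x) * norm x)" for b' \<mu> \<nu>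
  proof -
    obtain x1 where x1: "\<Sigma> x1 = 0" "\<mu> = return borel x1"
      using sol_is_return[OF Sigma_meas Cb Sigma_inj bm mono s1 i1] by blast
    obtain x2 where x2: "\<Sigma> x2 = 0" "\<nu> = return borel x2"
      using sol_is_return[OF Sigma_meas Cb Sigma_inj bm mono s2 i2] by blast
    have "x1 = x2" using x1 x2 Sigma_inj by metis
    then show ?thesis using x1 x2 by simp
  qed
  have zero_case: "\<mu> = \<nu>" if b0: "b = (\<lambda>x. 0)"
      and s1: "prob_solution (\<lambda>x. \<Sigma> x ** transpose (\<Sigma> x)) b \<mu>"
      and s2: "prob_solution (\<lambda>x. \<Sigma> x ** transpose (\<Sigma> x)) b \<nu>" for \<mu> \<nu>
    by (rule gen[OF b_meas b_mono s1 _ s2]) (simp_all add: b0)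
  show ?thesis
  proof (intro conjI allI impI)
    show "\<mu> = \<nu>" if "prob_solution (\<lambda>x. \<Sigma> x ** transpose (\<Sigma> x)) b \<mu>
              \<and> integrable \<mu> (\<lambda>x. norm (b x) * norm x)
              \<and> prob_solution (\<lambda>x. \<Sigma> x ** transpose (\<Sigma> x)) b \<nu>
              \<and> integrable \<nu> (\<lambda>x. norm (b x) * norm x)" for \<mu> \<nu>
      using that gen[OF b_meas b_mono] by blast
    show "\<mu> = \<nu>" if "b = (\<lambda>x. 0)" "prob_solution (\<lambda>x. \<Sigma> x ** transpose (\<Sigma> x)) b \<mu>
              \<and> prob_solution (\<lambda>x. \<Sigma> x ** transpose (\<Sigma> x)) b \<nu>" for \<mu> \<nu>
      using that zero_case by blast
    fix x0 assume h: "b = (\<lambda>x. 0) \<and> \<Sigma> x0 = 0"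
    show rs: "prob_solution (\<lambda>x. \<Sigma> x ** transpose (\<Sigma> x)) b (return borel x0)"
      using return_sol[OF Sigma_meas, of x0] h by simp
    fix \<mu> assume "prob_solution (\<lambda>x. \<Sigma> x ** transpose (\<Sigma> x)) b \<mu>"
    then show "\<mu> = return borel x0" using zero_case[OF _ _ rs] h by blast
  qed
qed

end
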